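(* Let $G=(V,E)$ be an $n$-vertex graph, $q>0$ an integer, and $0<\alpha<1$. Let $V_\alpha=\{v\in V: r(v)\ge\alpha\}$. Then $|V_\alpha|\le c_q/\alpha$, where $c_q=\sum_{i=0}^{q}q^i$.
   Context: $q$-random BFS ($q$-RBFS) from a vertex $v$ in the random neighbor model (where a random neighbor query for $u$ returns a uniformly random neighbor of $u$): initialize a queue $Q=(v)$, level $\ell[v]=0$ (all others $\infty$), and $H=(\{v\},\emptyset)$ rooted at $v$; while $Q$ is nonempty, pop $u$ and make $q$ independent random neighbor queries for $u$ obtaining $s_{u,1},\dots,s_{u,q}$; for each $i$ add $s_{u,i}$ and the edge $\{u,s_{u,i}\}$ to $H$, and if $\ell[u]<q-1$ and $\ell[s_{u,i}]=\infty$, set $\ell[s_{u,i}]=\ell[u]+1$ and enqueue $s_{u,i}$; return $H$ (undirected, simple). The reach probability $r(v)=r_q(v)$ of a vertex $v$ is the probability that a $q$-RBFS started at a uniformly random vertex of $V$ reaches (i.e., includes in its returned graph) $v$. *)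

theory Defs
  imports "HOL-Probability.Probability"
begin

definition simple_graph :: "'a set \<Rightarrow> ('a \<Rightarrow> 'a \<Rightarrow> bool) \<Rightarrow> bool" where
  "simple_graph V E \<longleftrightarrow> finite V \<and> (\<forall>u w. E u w \<longrightarrow> u \<in> V \<and> w \<in> V)
     \<and> (\<forall>u w. E u w \<longrightarrow> E w u) \<and> (\<forall>u. \<not> E u u)"

definition nbrs :: "('a \<Rightarrow> 'a \<Rightarrow> bool) \<Rightarrow> 'a \<Rightarrow> 'a set" where
  "nbrs E u = {w. E u w}"

fun rn_queries :: "('a \<Rightarrow> 'a \<Rightarrow> bool) \<Rightarrow> nat \<Rightarrow> 'a \<Rightarrow> 'a list pmf" where
  "rn_queries E 0 u = return_pmf []"
| "rn_queries E (Suc k) u =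
     (if nbrs E u = {} then return_pmf [] else
      do { s \<leftarrow> pmf_of_set (nbrs E u); ss \<leftarrow> rn_queries E k u; return_pmf (s # ss) })"

text \<open>State of the q-RBFS: queue, level map (None = infinity), vertices and edges of H.\<close>
type_synonym 'a rbfs_state = "'a list \<times> ('a \<Rightarrow> nat option) \<times> 'a set \<times> 'a set set"

fun rbfs_process :: "nat \<Rightarrow> 'a \<Rightarrow> nat \<Rightarrow> 'a list \<Rightarrow> 'a rbfs_state \<Rightarrow> 'a rbfs_state" where
  "rbfs_process q u lu [] st = st"
| "rbfs_process q u lu (s # ss) (Q, lev, Hv, He) =
     rbfs_process q u lu ss
       (if lu < q - 1 \<and> lev s = None
        then (Q @ [s], lev(s := Some (lu + 1)), insert s Hv, insert {u, s} He)
        else (Q, lev, insert s Hv, insert {u, s} He))"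

text \<open>One iteration of the while loop (only applied to a non-empty queue).\<close>
fun rbfs_step :: "('a \<Rightarrow> 'a \<Rightarrow> bool) \<Rightarrow> nat \<Rightarrow> 'a rbfs_state \<Rightarrow> 'a rbfs_state pmf" where
  "rbfs_step E q ([], lev, Hv, He) = return_pmf ([], lev, Hv, He)"
| "rbfs_step E q (u # Q, lev, Hv, He) =
     map_pmf (\<lambda>ss. rbfs_process q u (the (lev u)) ss (Q, lev, Hv, He)) (rn_queries E q u)"

text \<open>The while loop, run with fuel; each vertex is enqueued at most once, so fuel
  card V (the number of vertices) suffices for the queue to become empty.\<close>
fun rbfs_loop :: "('a \<Rightarrow> 'a \<Rightarrow> bool) \<Rightarrow> nat \<Rightarrow> nat \<Rightarrow> 'a rbfs_state \<Rightarrow> 'a rbfs_state pmf" where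
  "rbfs_loop E q 0 st = return_pmf st"
| "rbfs_loop E q (Suc k) st =
     (if fst st = [] then return_pmf st else rbfs_step E q st \<bind> rbfs_loop E q k)"

definition qRBFS :: "'a set \<Rightarrow> ('a \<Rightarrow> 'a \<Rightarrow> bool) \<Rightarrow> nat \<Rightarrow> 'a \<Rightarrow> ('a set \<times> 'a set set) pmf" where
  "qRBFS V E q v =
     map_pmf (\<lambda>(Q, lev, Hv, He). (Hv, He))
       (rbfs_loop E q (card V) ([v], (\<lambda>_. None)(v := Some 0), {v}, {}))"

definition reach_prob :: "'a set \<Rightarrow> ('a \<Rightarrow> 'a \<Rightarrow> bool) \<Rightarrow> nat \<Rightarrow> 'a \<Rightarrow> real" where
  "reach_prob V E q v =
     measure_pmf.prob (pmf_of_set V \<bind> qRBFS V E q) {H. v \<in> fst H}"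

end

theory Submission
  imports Defs
begin

definition Pw :: "nat \<Rightarrow> nat \<Rightarrow> nat" where
  "Pw q l = (\<Sum>i=1..q - l. q ^ i)"

definition cq :: "nat \<Rightarrow> nat" where
  "cq q = (\<Sum>i=0..q. q ^ i)"

definition inv_st :: "nat \<Rightarrow> 'a rbfs_state \<Rightarrow> bool" where
  "inv_st q st = (case st of (Q, lev, Hv, He) \<Rightarrow>
     finite Hv \<and> (\<forall>u\<in>set Q. \<exists>l. lev u = Some l \<and> l < q) \<and>
     card Hv + sum_list (map (\<lambda>u. Pw q (the (lev u))) Q) \<le> cq q)"

lemma Pw_step: "lu < q \<Longrightarrow> Pw q lu = q * (1 + (if lu < q - 1 then Pw q (lu+1) else 0))"
proof -
  assume a: "lu < q"
  show ?thesis
  proof (cases "lu < q - 1")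
    case True
    define m where "m = q - lu - 1"
    have m: "q - lu = Suc m" "m \<ge> 1" "q - (lu+1) = m" using True a by (auto simp: m_def)
    have "Pw q lu = (\<Sum>i=1..Suc m. q ^ i)" using m by (simp add: Pw_def)
    also have "\<dots> = q + (\<Sum>i=Suc 1..Suc m. q ^ i)" by (simp add: sum.atLeast_Suc_atMost)
    also have "(\<Sum>i=Suc 1..Suc m. q ^ i) = (\<Sum>i=1..m. q ^ Suc i)"
      by (subst sum.shift_bounds_cl_Suc_ivl[symmetric]) simp
    also have "\<dots> = q * (\<Sum>i=1..m. q ^ i)" by (simp add: sum_distrib_left)
    finally show ?thesis using True m by (simp add: Pw_def algebra_simps)
  next
    case False
    then have "q - lu = 1" using a by simp
    then show ?thesis using False by (simp add: Pw_def)
  qed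
qed

lemma cq_eq: "q > 0 \<Longrightarrow> cq q = 1 + Pw q 0"
  unfolding cq_def Pw_def by (simp add: sum.atLeast_Suc_atMost)

lemma rn_len: "ss \<in> set_pmf (rn_queries E k u) \<Longrightarrow> length ss \<le> k"
  by (induction k arbitrary: ss) (auto split: if_splits)

lemma process_inv:
  assumes "lu < q"
  shows "finite Hv \<Longrightarrow> (\<forall>u\<in>set Q. \<exists>l. lev u = Some l \<and> l < q) \<Longrightarrow>
    card Hv + sum_list (map (\<lambda>u. Pw q (the (lev u))) Q) + length ss * (1 + (if lu < q - 1 then Pw q (lu+1) else 0)) \<le> cq q
    \<Longrightarrow> inv_st q (rbfs_process q u lu ss (Q, lev, Hv, He))"
proof (induction ss arbitrary: Q lev Hv He)
  case Nil
  then show ?case by (simp add: inv_st_def)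
next
  case (Cons s ss)
  have ci: "card (insert s Hv) \<le> card Hv + 1" using Cons.prems(1) by (simp add: card_insert_if)
  show ?case
  proof (cases "lu < q - 1 \<and> lev s = None")
    case True
    have snQ: "s \<notin> set Q" using Cons.prems(2) True by force
    have meq: "map (\<lambda>u. Pw q (the ((lev(s := Some (lu + 1))) u))) Q = map (\<lambda>u. Pw q (the (lev u))) Q"
      using snQ by (intro map_cong) auto
    have "inv_st q (rbfs_process q u lu ss (Q @ [s], lev(s := Some (lu + 1)), insert s Hv, insert {u, s} He))"
    proof (rule Cons.IH)
      show "finite (insert s Hv)" using Cons.prems(1) by simp
      show "\<forall>u\<in>set (Q @ [s]). \<exists>l. (lev(s := Some (lu + 1))) u = Some l \<and> l < q"
        using Cons.prems(2) True by auto
      have "sum_list (map (\<lambda>u. Pw q (the ((lev(s := Some (lu + 1))) u))) (Q @ [s]))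
          = sum_list (map (\<lambda>u. Pw q (the (lev u))) Q) + Pw q (lu+1)"
        by (simp only: map_append sum_list_append meq) simp
      then show "card (insert s Hv) + sum_list (map (\<lambda>u. Pw q (the ((lev(s := Some (lu + 1))) u))) (Q @ [s])) +
          length ss * (1 + (if lu < q - 1 then Pw q (lu + 1) else 0)) \<le> cq q"
        using Cons.prems(3) True ci by (simp add: algebra_simps)
    qed
    then show ?thesis using True by simp
  next
    case False
    have "inv_st q (rbfs_process q u lu ss (Q, lev, insert s Hv, insert {u, s} He))"
      apply (rule Cons.IH)
      using Cons.prems ci by (auto simp: algebra_simps)
    then show ?thesis using False by auto
  qed
qed

lemma step_inv:
  assumes "inv_st q st" "fst st \<noteq> []" "st' \<in> set_pmf (rbfs_step E q st)"
  shows "inv_st q st'"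
proof -
  obtain u Q lev Hv He where st: "st = (u # Q, lev, Hv, He)" using assms(2)
    by (metis prod.collapse list.exhaust fst_conv)
  obtain ss where ss: "ss \<in> set_pmf (rn_queries E q u)"
    and st': "st' = rbfs_process q u (the (lev u)) ss (Q, lev, Hv, He)"
    using assms(3) st by auto
  obtain lu where lu: "lev u = Some lu" "lu < q" using assms(1) st by (auto simp: inv_st_def)
  have len: "length ss \<le> q" using rn_len[OF ss] .
  have "length ss * (1 + (if lu < q - 1 then Pw q (lu+1) else 0)) \<le> q * (1 + (if lu < q - 1 then Pw q (lu+1) else 0))"
    using len by (intro mult_right_mono) auto
  also have "\<dots> = Pw q lu" using Pw_step[OF lu(2)] by simp
  finally have le: "length ss * (1 + (if lu < q - 1 then Pw q (lu+1) else 0)) \<le> Pw q lu" .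
  show ?thesis unfolding st' using lu
    apply simp
    apply (rule process_inv)
    using assms(1) st le by (auto simp: inv_st_def)
qed

lemma loop_inv: "inv_st q st \<Longrightarrow> st' \<in> set_pmf (rbfs_loop E q k st) \<Longrightarrow> inv_st q st'"
proof (induction k arbitrary: st)
  case 0
  then show ?case by simp
next
  case (Suc k)
  show ?case
  proof (cases "fst st = []")
    case True
    then show ?thesis using Suc by simp
  next
    case False
    then obtain st1 where "st1 \<in> set_pmf (rbfs_step E q st)" "st' \<in> set_pmf (rbfs_loop E q k st1)"
      using Suc.prems by auto
    then show ?thesis using Suc.IH step_inv[OF Suc.prems(1) False] by blast
  qed
qed

lemma H_bound:
  assumes "q > 0" "H \<in> set_pmf (qRBFS V E q v)"
  shows "finite (fst H) \<and> card (fst H) \<le> cq q"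
proof -
  have i0: "inv_st q ([v], (\<lambda>_. None)(v := Some 0), {v}, {})"
    using assms(1) by (simp add: inv_st_def cq_eq)
  obtain Q lev Hv He where "(Q, lev, Hv, He) \<in> set_pmf (rbfs_loop E q (card V) ([v], (\<lambda>_. None)(v := Some 0), {v}, {}))"
    and "H = (Hv, He)" using assms(2) unfolding qRBFS_def by auto
  then show ?thesis using loop_inv[OF i0] by (fastforce simp: inv_st_def)
qed

theorem lemma3p7:
  fixes V :: "'a set" and E :: "'a \<Rightarrow> 'a \<Rightarrow> bool" and q :: nat and \<alpha> :: real
  assumes "simple_graph V E" and "V \<noteq> {}"
    and "q > 0" and "0 < \<alpha>" and "\<alpha> < 1"
  shows "real (card {v \<in> V. reach_prob V E q v \<ge> \<alpha>}) \<le> (\<Sum>i=0..q. real q ^ i) / \<alpha>"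
proof -
  have fin: "finite V" using assms(1) by (simp add: simple_graph_def)
  define M where "M = pmf_of_set V \<bind> qRBFS V E q"
  have Hb: "\<And>H. H \<in> set_pmf M \<Longrightarrow> finite (fst H) \<and> card (fst H) \<le> cq q"
  proof -
    fix H assume "H \<in> set_pmf M"
    then obtain v where "H \<in> set_pmf (qRBFS V E q v)" unfolding M_def by auto
    then show "finite (fst H) \<and> card (fst H) \<le> cq q" by (rule H_bound[OF assms(3)])
  qed
  have intI: "\<And>v. integrable (measure_pmf M) (indicator {H. v \<in> fst H} :: _ \<Rightarrow> real)"
    by (rule measure_pmf.integrable_const_bound[where B=1]) auto
  have rp: "\<And>v. reach_prob V E q v = (\<integral>H. indicator {H. v \<in> fst H} H \<partial>measure_pmf M)"
    by (simp add: reach_prob_def M_def)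
  have "(\<Sum>v\<in>V. reach_prob V E q v) = (\<integral>H. (\<Sum>v\<in>V. indicator {H. v \<in> fst H} H) \<partial>measure_pmf M)"
    unfolding rp using intI by simp
  also have "\<dots> \<le> real (cq q)"
  proof (rule measure_pmf.integral_le_const)
    show "integrable (measure_pmf M) (\<lambda>H. \<Sum>v\<in>V. indicator {H. v \<in> fst H} H :: real)"
      by (rule Bochner_Integration.integrable_sum) (rule intI)
    show "AE H in measure_pmf M. (\<Sum>v\<in>V. indicator {H. v \<in> fst H} H :: real) \<le> real (cq q)"
    proof (rule AE_pmfI)
      fix H assume H: "H \<in> set_pmf M"
      have "(\<Sum>v\<in>V. indicator {H. v \<in> fst H} H :: real) = real (card (V \<inter> fst H))"
        using fin by (simp add: indicator_def sum.If_cases Int_def)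
      also have "card (V \<inter> fst H) \<le> card (fst H)" using Hb[OF H] by (intro card_mono) auto
      then have "real (card (V \<inter> fst H)) \<le> real (cq q)" using Hb[OF H] by linarith
      finally show "(\<Sum>v\<in>V. indicator {H. v \<in> fst H} H :: real) \<le> real (cq q)" .
    qed
  qed
  finally have sumb: "(\<Sum>v\<in>V. reach_prob V E q v) \<le> real (cq q)" .
  define A where "A = {v \<in> V. reach_prob V E q v \<ge> \<alpha>}"
  have "\<alpha> * real (card A) = (\<Sum>v\<in>A. \<alpha>)" by simp
  also have "\<dots> \<le> (\<Sum>v\<in>A. reach_prob V E q v)" by (rule sum_mono) (auto simp: A_def)
  also have "\<dots> \<le> (\<Sum>v\<in>V. reach_prob V E q v)"
    by (rule sum_mono2[OF fin]) (auto simp: A_def reach_prob_def)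
  also have "\<dots> \<le> real (cq q)" by (rule sumb)
  also have "real (cq q) = (\<Sum>i=0..q. real q ^ i)" by (simp add: cq_def)
  finally show ?thesis using assms(4) unfolding A_def by (simp add: field_simps mult.commute)
qed

end
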